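(* Let $k$ be a positive integer and let $L$ be a link with $\det L\neq 0$ admitting non-trivial $(2k+1)$-colorings. If $S\subseteq\{0,1,2,\dots,k\}\subseteq \mathbf{Z}/(2k+1)\mathbf{Z}$, then $S$ is not a $(2k+1)$-sufficient set of colors for $L$.
   Context: For a positive integer $n$, an $n$-coloring of a link diagram is an assignment of an element of $\mathbf{Z}/n\mathbf{Z}$ to each arc such that at every crossing, with over-arc color $b$ and under-arc colors $a,c$, $2b-a-c\equiv 0\pmod n$; it is non-trivial if at least two distinct colors are used. An $n$-sufficient set of colors for $L$ is a set of residues mod $n$ such that some diagram of $L$ admits a non-trivial $n$-coloring using only colors from this set. $\det L$ denotes the determinant of the link $L$. *)

theory Defs
  imports "Jordan_Normal_Form.Determinant"
begin

text \<open>Arcs are numbered 0 ..< arcs D.  Each crossing is a triple (b, a, c):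
  b is the over-arc and a, c are the two under-arcs meeting at it.\<close>

record diagram =
  arcs :: nat
  crossings :: "(nat \<times> nat \<times> nat) list"

definition over_arc :: "nat \<times> nat \<times> nat \<Rightarrow> nat" where
  "over_arc x = fst x"
definition under_arc1 :: "nat \<times> nat \<times> nat \<Rightarrow> nat" where
  "under_arc1 x = fst (snd x)"
definition under_arc2 :: "nat \<times> nat \<times> nat \<Rightarrow> nat" where
  "under_arc2 x = snd (snd x)"

text \<open>Basic well-formedness: at least one arc, all arc indices in range, and every arc
  either ends at exactly two under-crossings (its two endpoints) or at none
  (a crossingless circle component).\<close>
definition link_diagram :: "diagram \<Rightarrow> bool" where
  "link_diagram D \<longleftrightarrow> arcs D \<ge> 1 \<and>
     (\<forall>x \<in> set (crossings D). over_arc x < arcs D \<and> under_arc1 x < arcs D \<and> under_arc2 x < arcs D) \<and>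
     (\<forall>a < arcs D.
        length (filter (\<lambda>x. under_arc1 x = a) (crossings D))
        + length (filter (\<lambda>x. under_arc2 x = a) (crossings D)) \<in> {0, 2})"

text \<open>n-colorings: colors are integers read modulo n.\<close>
definition coloring :: "nat \<Rightarrow> diagram \<Rightarrow> (nat \<Rightarrow> int) \<Rightarrow> bool" where
  "coloring n D f \<longleftrightarrow>
     (\<forall>x \<in> set (crossings D).
        (2 * f (over_arc x) - f (under_arc1 x) - f (under_arc2 x)) mod int n = 0)"

definition nontrivial_coloring :: "nat \<Rightarrow> diagram \<Rightarrow> (nat \<Rightarrow> int) \<Rightarrow> bool" where
  "nontrivial_coloring n D f \<longleftrightarrow> coloring n D f \<and>
     (\<exists>a < arcs D. \<exists>b < arcs D. f a mod int n \<noteq> f b mod int n)"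

text \<open>A coloring uses only colors from the set S of residues (S a set of representatives in [0,n)).\<close>
definition colors_in :: "nat \<Rightarrow> diagram \<Rightarrow> (nat \<Rightarrow> int) \<Rightarrow> int set \<Rightarrow> bool" where
  "colors_in n D f S \<longleftrightarrow> (\<forall>a < arcs D. f a mod int n \<in> S)"

definition coloring_matrix :: "diagram \<Rightarrow> int mat" where
  "coloring_matrix D = mat (length (crossings D)) (arcs D)
     (\<lambda>(i, j). let x = crossings D ! i in
        2 * (if over_arc x = j then 1 else 0) - (if under_arc1 x = j then 1 else 0)
          - (if under_arc2 x = j then 1 else 0))"

text \<open>Determinant of the link: absolute value of a first minor of the coloring matrix
  (deleting one row and one column); 0 when the matrix is not square (split diagrams with
  crossingless components).\<close>
definition link_det :: "diagram \<Rightarrow> nat" where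
  "link_det D = (if length (crossings D) = arcs D \<and> arcs D \<ge> 1
     then nat \<bar>det (mat_delete (coloring_matrix D) 0 0)\<bar> else 0)"

end

theory Submission
  imports Defs
begin

lemma row_sum:
  fixes h :: "nat \<Rightarrow> int"
  assumes "b < n" "a < n" "c < n"
  shows "(\<Sum>j<n. (2 * (if b = j then 1 else 0) - (if a = j then 1 else 0)
          - (if c = j then 1 else 0)) * h j) = 2 * h b - h a - h c"
proof -
  have "(\<Sum>j<n. (2 * (if b = j then 1 else 0) - (if a = j then 1 else 0)
          - (if c = j then 1 else 0)) * h j)
      = 2 * (\<Sum>j<n. (if b = j then h j else 0)) - (\<Sum>j<n. (if a = j then h j else 0))
        - (\<Sum>j<n. (if c = j then h j else 0))"
  proof -
    have "\<And>j. (2 * (if b = j then 1 else 0) - (if a = j then 1 else 0)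
          - (if c = j then 1 else 0)) * h j = 2 * (if b = j then h j else 0) - (if a = j then h j else 0)
        - (if c = j then h j else 0)" by (simp add: algebra_simps)
    hence "(\<Sum>j<n. (2 * (if b = j then 1 else 0) - (if a = j then 1 else 0)
          - (if c = j then 1 else 0)) * h j) = (\<Sum>j<n. 2 * (if b = j then h j else 0) - (if a = j then h j else 0)
        - (if c = j then h j else 0))" by (intro sum.cong) auto
    also have "\<dots> = 2 * (\<Sum>j<n. (if b = j then h j else 0)) - (\<Sum>j<n. (if a = j then h j else 0))
        - (\<Sum>j<n. (if c = j then h j else 0))"
      by (simp only: sum_subtractf sum_distrib_left)
    finally show ?thesis .
  qed
  also have "\<dots> = 2 * h b - h a - h c" using assms by simp
  finally show ?thesis .
qed

lemma small_zero:
  fixes z :: int and k :: nat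
  assumes "z mod (2 * int k + 1) = 0" "\<bar>z\<bar> \<le> 2 * int k"
  shows "z = 0"
proof -
  obtain q where q: "z = (2 * int k + 1) * q" using assms(1) by (metis mod_eq_0_iff_dvd dvd_def)
  have "q = 0"
  proof (rule ccontr)
    assume "q \<noteq> 0"
    hence "\<bar>q\<bar> \<ge> 1" by simp
    hence "\<bar>z\<bar> \<ge> 2 * int k + 1" unfolding q abs_mult by (simp add: mult_le_cancel_left1)
    thus False using assms(2) by simp
  qed
  thus ?thesis using q by simp
qed

theorem theorem4p1:
  fixes k :: nat and D :: diagram and S :: "int set"
  assumes "k \<ge> 1"
    and "link_diagram D"
    and "link_det D \<noteq> 0"
    and "\<exists>f. nontrivial_coloring (2 * k + 1) D f"
    and "S \<subseteq> {0 .. int k}"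
  shows "\<not> (\<exists>f. nontrivial_coloring (2 * k + 1) D f \<and> colors_in (2 * k + 1) D f S)"
proof
  assume "\<exists>f. nontrivial_coloring (2 * k + 1) D f \<and> colors_in (2 * k + 1) D f S"
  then obtain f where nt: "nontrivial_coloring (2 * k + 1) D f" and ci: "colors_in (2 * k + 1) D f S"
    by blast
  define n where "n = arcs D"
  define m :: int where "m = 2 * int k + 1"
  have mdef: "int (2 * k + 1) = m" unfolding m_def by simp
  have sq: "length (crossings D) = n" and n1: "n \<ge> 1" and dn: "det (mat_delete (coloring_matrix D) 0 0) \<noteq> 0"
    using assms(3) unfolding link_det_def n_def by (auto split: if_splits)
  have rng: "\<And>x. x \<in> set (crossings D) \<Longrightarrow> over_arc x < n \<and> under_arc1 x < n \<and> under_arc2 x < n"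
    using assms(2) unfolding link_diagram_def n_def by auto
  define g where "g a = f a mod m" for a
  have grng: "\<And>a. a < n \<Longrightarrow> 0 \<le> g a \<and> g a \<le> int k"
    using ci assms(5) unfolding colors_in_def g_def n_def mdef by auto
  have gz: "2 * g (over_arc x) - g (under_arc1 x) - g (under_arc2 x) = 0"
    if x: "x \<in> set (crossings D)" for x
  proof -
    have "(2 * f (over_arc x) - f (under_arc1 x) - f (under_arc2 x)) mod m = 0"
      using nt x unfolding nontrivial_coloring_def coloring_def mdef by auto
    hence d1: "m dvd (2 * f (over_arc x) - f (under_arc1 x) - f (under_arc2 x))" by presburger
    have e: "\<And>y. f y = m * (f y div m) + g y" unfolding g_def by simp
    have "2 * g (over_arc x) - g (under_arc1 x) - g (under_arc2 x)
       = (2 * f (over_arc x) - f (under_arc1 x) - f (under_arc2 x))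
         - m * (2 * (f (over_arc x) div m) - f (under_arc1 x) div m - f (under_arc2 x) div m)"
      by (subst (1 2 3) e) (simp add: algebra_simps)
    hence "m dvd (2 * g (over_arc x) - g (under_arc1 x) - g (under_arc2 x))"
      using d1 by simp
    hence "(2 * g (over_arc x) - g (under_arc1 x) - g (under_arc2 x)) mod m = 0" by simp
    moreover have "\<bar>2 * g (over_arc x) - g (under_arc1 x) - g (under_arc2 x)\<bar> \<le> 2 * int k"
      using grng rng[OF x] by (smt (verit))
    ultimately show ?thesis unfolding m_def by (rule small_zero)
  qed
  obtain a b where ab: "a < n" "b < n" "g a \<noteq> g b"
    using nt unfolding nontrivial_coloring_def g_def n_def mdef by auto
  define M where "M = coloring_matrix D"
  define M' where "M' = mat_delete M 0 0"
  define h where "h j = g j - g 0" for j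
  define v where "v = vec (n - 1) (\<lambda>j. h (Suc j))"
  have Mc: "M \<in> carrier_mat n n" unfolding M_def coloring_matrix_def using sq n_def by auto
  have M'c: "M' \<in> carrier_mat (n-1) (n-1)" unfolding M'_def using mat_delete_carrier[OF Mc] .
  have vc: "v \<in> carrier_vec (n-1)" unfolding v_def by simp
  have vnz: "v \<noteq> 0\<^sub>v (n-1)"
  proof
    assume v0: "v = 0\<^sub>v (n-1)"
    have "\<And>j. j < n \<Longrightarrow> h j = 0"
    proof -
      fix j assume j: "j < n"
      show "h j = 0"
      proof (cases j)
        case 0 thus ?thesis unfolding h_def by simp
      next
        case (Suc j')
        hence "j' < n - 1" using j by simp
        hence "v $ j' = 0" using v0 by simp
        thus ?thesis using \<open>j' < n - 1\<close> Suc unfolding v_def by simp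
      qed
    qed
    thus False using ab unfolding h_def by (metis eq_iff_diff_eq_0)
  qed
  have Mv: "M' *\<^sub>v v = 0\<^sub>v (n-1)"
  proof (rule eq_vecI)
    show "dim_vec (M' *\<^sub>v v) = dim_vec (0\<^sub>v (n - 1))" using M'c by simp
  next
    fix i assume "i < dim_vec (0\<^sub>v (n - 1))"
    hence i: "i < n - 1" by simp
    define x where "x = crossings D ! Suc i"
    have x: "x \<in> set (crossings D)" unfolding x_def using i sq by simp
    note r = rng[OF x]
    have Mentry: "M $$ (Suc i, j) = 2 * (if over_arc x = j then 1 else 0) - (if under_arc1 x = j then 1 else 0)
          - (if under_arc2 x = j then 1 else 0)" if "j < n" for j
      unfolding M_def coloring_matrix_def x_def using i sq that n_def by simp
    have "(M' *\<^sub>v v) $ i = (\<Sum>j<n-1. M $$ (Suc i, Suc j) * h (Suc j))"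
      using i M'c unfolding M'_def mat_delete_def v_def
      using Mc by (simp add: scalar_prod_def atLeast0LessThan mat_delete_def)
    also have "\<dots> = (\<Sum>j<n. M $$ (Suc i, j) * h j)"
    proof -
      have "(\<Sum>j<n. M $$ (Suc i, j) * h j) = (\<Sum>j<Suc (n-1). M $$ (Suc i, j) * h j)"
        using n1 by simp
      also have "\<dots> = M $$ (Suc i, 0) * h 0 + (\<Sum>j<n-1. M $$ (Suc i, Suc j) * h (Suc j))"
        by (subst sum.lessThan_Suc_shift) simp
      also have "\<dots> = (\<Sum>j<n-1. M $$ (Suc i, Suc j) * h (Suc j))" unfolding h_def by simp
      finally show ?thesis by simp
    qed
    also have "\<dots> = (\<Sum>j<n. (2 * (if over_arc x = j then 1 else 0) - (if under_arc1 x = j then 1 else 0)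
          - (if under_arc2 x = j then 1 else 0)) * h j)"
      by (rule sum.cong) (auto simp: Mentry)
    also have "\<dots> = 2 * h (over_arc x) - h (under_arc1 x) - h (under_arc2 x)"
      using r by (intro row_sum) auto
    also have "\<dots> = 0" using gz[OF x] unfolding h_def by simp
    finally show "(M' *\<^sub>v v) $ i = 0\<^sub>v (n - 1) $ i" using i by simp
  qed
  have "det M' = 0" using det_0_iff_vec_prod_zero[OF M'c] vc vnz Mv by blast
  thus False using dn unfolding M'_def M_def by simp
qed

end
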